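(* For every hexagon $X$ of the dappled triangular grid $\mathbf{T}$, the hued graph $X^{-}$ is a retract of the hued graph $\mathbf{T}^{-}$.
   Context: A hued graph is a graph with a proper coloring $\psi:V\to\mathbb{Z}_3$ (hue); a dappled graph is a hued graph with additionally a proper coloring $\varphi:V\to\mathbb{Z}_2^2$ (color). For a dappled graph $G$, $G^{-}$ is the hued graph obtained by forgetting the colors. The dappled triangular grid $\mathbf{T}$ has vertex set $\mathbb{Z}^2$, with $(i_1,j_1)$ and $(i_2,j_2)$ adjacent iff $(i_2-i_1,j_2-j_1)\in\{\pm(1,0),\pm(0,1),\pm(1,1)\}$, hue $(i+j)\bmod 3$ and color $(i\bmod 2,j\bmod 2)$ at $(i,j)$. A hexagon is the dappled subgraph of $\mathbf{T}$ induced by a vertex and its neighbors. A homomorphism of hued graphs maps adjacent vertices to adjacent vertices and preserves hue. A retract of a hued graph $G$ is an induced subgraph $H$ of $G$ for which there exists a retraction, i.e. a homomorphism of hued graphs $f:V(G)\to V(H)$ with $f(v)=v$ for all $v\in V(H)$. *)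

theory Defs
  imports Main
begin

text \<open>Hued graphs are given by a vertex set V, a symmetric adjacency relation E
  and a hue function into Z_3 (represented by int values taken mod 3).\<close>

definition hued_hom ::
  "'a set \<Rightarrow> ('a \<Rightarrow> 'a \<Rightarrow> bool) \<Rightarrow> ('a \<Rightarrow> int) \<Rightarrow>
   'b set \<Rightarrow> ('b \<Rightarrow> 'b \<Rightarrow> bool) \<Rightarrow> ('b \<Rightarrow> int) \<Rightarrow> ('a \<Rightarrow> 'b) \<Rightarrow> bool" where
  "hued_hom V E h W F k f \<longleftrightarrow>
     (\<forall>v\<in>V. f v \<in> W) \<and>
     (\<forall>u\<in>V. \<forall>v\<in>V. E u v \<longrightarrow> F (f u) (f v)) \<and>
     (\<forall>v\<in>V. k (f v) mod 3 = h v mod 3)"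

definition induced :: "'a set \<Rightarrow> ('a \<Rightarrow> 'a \<Rightarrow> bool) \<Rightarrow> 'a \<Rightarrow> 'a \<Rightarrow> bool" where
  "induced W E u v \<longleftrightarrow> u \<in> W \<and> v \<in> W \<and> E u v"

definition hued_retract ::
  "'a set \<Rightarrow> ('a \<Rightarrow> 'a \<Rightarrow> bool) \<Rightarrow> ('a \<Rightarrow> int) \<Rightarrow> 'a set \<Rightarrow> bool" where
  "hued_retract V E h W \<longleftrightarrow> W \<subseteq> V \<and>
     (\<exists>f. hued_hom V E h W (induced W E) h f \<and> (\<forall>v\<in>W. f v = v))"

definition T_adj :: "int \<times> int \<Rightarrow> int \<times> int \<Rightarrow> bool" where
  "T_adj p q \<longleftrightarrow> (fst q - fst p, snd q - snd p) \<in>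
     {(1,0), (-1,0), (0,1), (0,-1), (1,1), (-1,-1)}"

definition T_hue :: "int \<times> int \<Rightarrow> int" where
  "T_hue p = (fst p + snd p) mod 3"

definition T_color :: "int \<times> int \<Rightarrow> int \<times> int" where
  "T_color p = (fst p mod 2, snd p mod 2)"

definition hexagon :: "int \<times> int \<Rightarrow> (int \<times> int) set" where
  "hexagon c = insert c {v. T_adj c v}"

end

theory Submission
  imports Defs
begin

definition tri :: "int \<Rightarrow> int \<times> int" where
  "tri k = (if k = 0 then (0,0) else if k = 1 then (1,0) else (1,1))"

definition Ex :: "(int \<times> int) set" where
  "Ex = {(0,1),(-1,0),(-1,-1),(0,-1),(-2,-2),(-2,0),(2,0)}"

definition g :: "int \<times> int \<Rightarrow> int \<times> int" where
  "g p = (if p = (0,1) then (0,1) else if p = (-1,0) then (-1,0)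
          else if p = (-1,-1) then (-1,-1) else if p = (0,-1) then (0,-1)
          else if p = (-2,-2) then (0,-1) else if p = (-2,0) then (0,1)
          else if p = (2,0) then (0,-1) else tri ((fst p + snd p) mod 3))"

definition H0 :: "(int \<times> int) set" where
  "H0 = {(0,0),(1,0),(-1,0),(0,1),(0,-1),(1,1),(-1,-1)}"

lemma g_gen: "p \<notin> Ex \<Longrightarrow> g p = tri ((fst p + snd p) mod 3)"
  unfolding g_def Ex_def by auto

lemma tri_adj:
  assumes "0 \<le> a" "a < 3" "0 \<le> b" "b < 3" "a \<noteq> b"
  shows "T_adj (tri a) (tri b)"
proof -
  have "a = 0 \<or> a = 1 \<or> a = 2" "b = 0 \<or> b = 1 \<or> b = 2" using assms by auto
  then show ?thesis using assms by (auto simp: tri_def T_adj_def)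
qed

lemma tri_H0: "0 \<le> a \<Longrightarrow> a < 3 \<Longrightarrow> tri a \<in> H0"
  by (auto simp: tri_def H0_def)

lemma g_H0: "g p \<in> H0"
  unfolding g_def using tri_H0[of "(fst p + snd p) mod 3"] by (auto simp: H0_def)

lemma g_id: "p \<in> H0 \<Longrightarrow> g p = p"
  unfolding H0_def g_def tri_def by auto

lemma tri_hue: "0 \<le> a \<Longrightarrow> a < 3 \<Longrightarrow> (fst (tri a) + snd (tri a)) mod 3 = a"
proof -
  assume "0 \<le> a" "a < 3"
  then have "a = 0 \<or> a = 1 \<or> a = 2" by auto
  then show ?thesis by (auto simp: tri_def)
qed

lemma g_hue: "(fst (g p) + snd (g p)) mod 3 = (fst p + snd p) mod 3"
proof (cases "p \<in> Ex")
  case True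
  then show ?thesis unfolding Ex_def g_def by auto
next
  case False
  then show ?thesis using g_gen tri_hue[of "(fst p + snd p) mod 3"] by simp
qed

lemma adj_cases: "T_adj p q \<Longrightarrow> \<exists>dx dy. q = (fst p + dx, snd p + dy) \<and>
   (dx, dy) \<in> {(1,0), (-1,0), (0,1), (0,-1), (1,1), (-1,-1)}"
proof -
  assume "T_adj p q"
  then show ?thesis unfolding T_adj_def
    by (intro exI[of _ "fst q - fst p"] exI[of _ "snd q - snd p"]) (cases p; cases q; simp)
qed

lemma T_adj_sym: "T_adj p q \<Longrightarrow> T_adj q p"
  unfolding T_adj_def by auto

lemma g_adj_Ex:
  assumes "p \<in> Ex" "T_adj p q" shows "T_adj (g p) (g q) \<and> T_adj (g q) (g p)"
proof -
  obtain dx dy where q: "q = (fst p + dx, snd p + dy)" and d: "(dx, dy) \<in> {(1,0), (-1,0), (0,1), (0,-1), (1,1), (-1,-1)}"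
    using adj_cases[OF assms(2)] by auto
  have p: "p = (0,1) \<or> p = (-1,0) \<or> p = (-1,-1) \<or> p = (0,-1) \<or> p = (-2,-2) \<or> p = (-2,0) \<or> p = (2,0)"
    using assms(1) unfolding Ex_def by auto
  have d': "(dx = 1 \<and> dy = 0) \<or> (dx = -1 \<and> dy = 0) \<or> (dx = 0 \<and> dy = 1) \<or> (dx = 0 \<and> dy = -1) \<or> (dx = 1 \<and> dy = 1) \<or> (dx = -1 \<and> dy = -1)"
    using d by auto
  from p d' show ?thesis unfolding q
    by (elim disjE conjE; simp add: g_def tri_def T_adj_def)
qed

lemma g_adj:
  assumes "T_adj p q" shows "T_adj (g p) (g q)"
proof (cases "p \<in> Ex")
  case True
  then show ?thesis using g_adj_Ex assms by blast
next
  case pF: False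
  show ?thesis
  proof (cases "q \<in> Ex")
    case True
    then show ?thesis using g_adj_Ex T_adj_sym assms by blast
  next
    case qF: False
    obtain dx dy where q: "q = (fst p + dx, snd p + dy)" and d: "(dx, dy) \<in> {(1,0), (-1,0), (0,1), (0,-1), (1,1), (-1,-1)}"
      using adj_cases[OF assms] by auto
    have ne: "(fst p + snd p) mod 3 \<noteq> (fst q + snd q) mod 3" using d unfolding q by auto presburger+
    show ?thesis using g_gen[OF pF] g_gen[OF qF] tri_adj[OF _ _ _ _ ne] by simp
  qed
qed

definition sh :: "int \<times> int \<Rightarrow> int \<times> int \<Rightarrow> int \<times> int" where
  "sh c p = (fst p - fst c, snd p - snd c)"

definition F :: "int \<times> int \<Rightarrow> int \<times> int \<Rightarrow> int \<times> int" where
  "F c p = (fst c + fst (g (sh c p)), snd c + snd (g (sh c p)))"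

lemma hex_iff: "v \<in> hexagon c \<longleftrightarrow> sh c v \<in> H0"
  by (cases v; cases c) (auto simp: hexagon_def T_adj_def H0_def sh_def)

lemma sh_F: "sh c (F c p) = g (sh c p)"
  by (simp add: sh_def F_def)

lemma adj_sh: "T_adj (sh c p) (sh c q) \<longleftrightarrow> T_adj p q"
  by (simp add: sh_def T_adj_def algebra_simps)

theorem lemma10:
  fixes c :: "int \<times> int"
  shows "hued_retract UNIV T_adj T_hue (hexagon c)"
  unfolding hued_retract_def
proof (intro conjI exI[of _ "F c"])
  show "hexagon c \<subseteq> UNIV" by simp
  show "\<forall>v\<in>hexagon c. F c v = v"
  proof
    fix v assume "v \<in> hexagon c"
    then have "g (sh c v) = sh c v" using g_id hex_iff by blast
    then show "F c v = v" by (cases v) (simp add: F_def sh_def)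
  qed
  have inh: "F c v \<in> hexagon c" for v
    using hex_iff sh_F g_H0 by metis
  show "hued_hom UNIV T_adj T_hue (hexagon c) (induced (hexagon c) T_adj) T_hue (F c)"
    unfolding hued_hom_def
  proof (intro conjI ballI impI)
    fix v show "F c v \<in> hexagon c" by (rule inh)
  next
    fix u v assume "T_adj u v"
    then have "T_adj (g (sh c u)) (g (sh c v))" using g_adj adj_sh by blast
    then have "T_adj (F c u) (F c v)" using adj_sh sh_F by metis
    then show "induced (hexagon c) T_adj (F c u) (F c v)"
      using inh unfolding induced_def by blast
  next
    fix v
    have h: "(fst (g (sh c v)) + snd (g (sh c v))) mod 3 = (fst (sh c v) + snd (sh c v)) mod 3"
      by (rule g_hue)
    show "T_hue (F c v) mod 3 = T_hue v mod 3"
      unfolding T_hue_def F_def using h unfolding sh_def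
      by (simp add: mod_simps) (metis (no_types, lifting) add.assoc add.commute add_diff_cancel_left' diff_add_cancel mod_add_right_eq)
  qed
qed

end
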